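(* For every finite simple graph $H$: (i) $\rho(H)\le\rho_R(H)$. (ii) If $H'$ is obtained from $H$ by removing some edges (keeping all vertices), then $\rho_R(H')\ge\rho_R(H)$. (iii) If $H$ is the union of two vertex-disjoint graphs $H_1$ and $H_2$ together with possibly some additional edges between $V(H_1)$ and $V(H_2)$, and $m(H_1,H_2)$ denotes the number of pairs $(u,v)$ with $u\in V(H_1)$, $v\in V(H_2)$, $uv\notin E(H)$, then $$\rho_R(H_1)+\rho_R(H_2)\le\rho_R(H)\le\rho_R(H_1)+\rho_R(H_2)+m(H_1,H_2).$$
   Context: All graphs are finite and simple. A coloring means a proper vertex coloring; an induced subgraph is rainbow if all its vertices have pairwise different colors. $\rho(H)$ is the least number $m$ such that some graph $G$ on $m$ vertices has the property that every proper vertex coloring of $G$ contains a rainbow induced subgraph isomorphic to $H$. If $V(H)=\{h_1,\ldots,h_n\}$, a replication graph of $H$ is a graph $G$ obtained by replacing each vertex $h_i$ by a clique $K_i$ with $|K_i|\ge1$ (cliques pairwise vertex-disjoint), where two vertices in different cliques $K_i,K_j$ are adjacent iff $h_ih_j\in E(H)$. $\rho_R(H)$ is the minimum order of a replication graph $G$ of $H$ such that every proper vertex coloring of $G$ admits a choice of exactly one vertex from each clique $K_i$ with all chosen vertices of pairwise different colors (such a choice induces a rainbow copy of $H$). *)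

theory Defs
  imports Main
begin

definition simple_graph :: "'a set \<Rightarrow> ('a \<Rightarrow> 'a \<Rightarrow> bool) \<Rightarrow> bool" where
  "simple_graph V E \<longleftrightarrow> finite V \<and>
     (\<forall>u v. E u v \<longrightarrow> u \<in> V \<and> v \<in> V \<and> u \<noteq> v \<and> E v u)"

definition proper_coloring :: "'a set \<Rightarrow> ('a \<Rightarrow> 'a \<Rightarrow> bool) \<Rightarrow> ('a \<Rightarrow> nat) \<Rightarrow> bool" where
  "proper_coloring V E c \<longleftrightarrow> (\<forall>u\<in>V. \<forall>v\<in>V. E u v \<longrightarrow> c u \<noteq> c v)"

definition has_rainbow_induced_copy ::
  "'a set \<Rightarrow> ('a \<Rightarrow> 'a \<Rightarrow> bool) \<Rightarrow> 'b set \<Rightarrow> ('b \<Rightarrow> 'b \<Rightarrow> bool) \<Rightarrow> ('b \<Rightarrow> nat) \<Rightarrow> bool" where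
  "has_rainbow_induced_copy VH EH VG EG c \<longleftrightarrow>
     (\<exists>f. f ` VH \<subseteq> VG \<and> inj_on f VH \<and>
          (\<forall>u\<in>VH. \<forall>v\<in>VH. EG (f u) (f v) \<longleftrightarrow> EH u v) \<and>
          inj_on (c \<circ> f) VH)"

text \<open>rho(H): least m such that some graph on m vertices (w.l.o.g. vertex set {0..<m})
  has a rainbow induced copy of H in every proper coloring.\<close>
definition rho :: "'a set \<Rightarrow> ('a \<Rightarrow> 'a \<Rightarrow> bool) \<Rightarrow> nat" where
  "rho V E = (LEAST m. \<exists>EG :: nat \<Rightarrow> nat \<Rightarrow> bool. simple_graph {..<m} EG \<and>
       (\<forall>c. proper_coloring {..<m} EG c \<longrightarrow> has_rainbow_induced_copy V E {..<m} EG c))"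

text \<open>Replication graph of H with clique sizes k: vertex h replaced by clique
  {(h,i) | i < k h}.\<close>
definition rep_V :: "'a set \<Rightarrow> ('a \<Rightarrow> nat) \<Rightarrow> ('a \<times> nat) set" where
  "rep_V V k = {(h, i). h \<in> V \<and> i < k h}"

definition rep_E :: "('a \<Rightarrow> 'a \<Rightarrow> bool) \<Rightarrow> ('a \<times> nat) \<Rightarrow> ('a \<times> nat) \<Rightarrow> bool" where
  "rep_E E x y \<longleftrightarrow> (fst x = fst y \<and> snd x \<noteq> snd y) \<or> (fst x \<noteq> fst y \<and> E (fst x) (fst y))"

definition rho_R :: "'a set \<Rightarrow> ('a \<Rightarrow> 'a \<Rightarrow> bool) \<Rightarrow> nat" where
  "rho_R V E = (LEAST m. \<exists>k :: 'a \<Rightarrow> nat. (\<forall>h\<in>V. 1 \<le> k h) \<and> (\<Sum>h\<in>V. k h) = m \<and>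
       (\<forall>c. proper_coloring (rep_V V k) (rep_E E) c \<longrightarrow>
          (\<exists>s. (\<forall>h\<in>V. s h < k h) \<and> inj_on (\<lambda>h. c (h, s h)) V)))"

definition restr :: "('a \<Rightarrow> 'a \<Rightarrow> bool) \<Rightarrow> 'a set \<Rightarrow> 'a \<Rightarrow> 'a \<Rightarrow> bool" where
  "restr E A u v \<longleftrightarrow> E u v \<and> u \<in> A \<and> v \<in> A"

end

theory Submission
  imports Defs
begin

definition good :: "'a set \<Rightarrow> ('a \<Rightarrow> 'a \<Rightarrow> bool) \<Rightarrow> ('a \<Rightarrow> nat) \<Rightarrow> bool" where
  "good V E k \<longleftrightarrow> (\<forall>h\<in>V. 1 \<le> k h) \<and>
       (\<forall>c. proper_coloring (rep_V V k) (rep_E E) c \<longrightarrow>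
          (\<exists>s. (\<forall>h\<in>V. s h < k h) \<and> inj_on (\<lambda>h. c (h, s h)) V))"

lemma rho_R_alt: "rho_R V E = (LEAST m. \<exists>k. good V E k \<and> sum k V = m)"
  unfolding rho_R_def good_def by (intro arg_cong[where f=Least] ext) blast

lemma rho_R_le: "good V E k \<Longrightarrow> rho_R V E \<le> sum k V"
  unfolding rho_R_alt by (rule Least_le) blast

lemma rep_V_Sigma: "rep_V V k = Sigma V (\<lambda>h. {..<k h})"
  unfolding rep_V_def by auto

lemma finite_rep_V: "finite V \<Longrightarrow> finite (rep_V V k)"
  unfolding rep_V_Sigma by auto

lemma card_rep_V: "finite V \<Longrightarrow> card (rep_V V k) = sum k V"
  unfolding rep_V_Sigma by simp

lemma greedy:
  assumes "finite V"
  shows "(\<forall>h\<in>V. card V \<le> k h) \<longrightarrow> (\<forall>h\<in>V. inj_on (\<lambda>i. c (h,i)) {..<k h}) \<longrightarrow>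
     (\<exists>s. (\<forall>h\<in>V. s h < k h) \<and> inj_on (\<lambda>h. c (h, s h)) V)"
  using assms
proof (induction V rule: finite_induct)
  case empty show ?case by auto
next
  case (insert a F)
  show ?case
  proof (intro impI)
    assume A: "\<forall>h\<in>insert a F. card (insert a F) \<le> k h"
      and B: "\<forall>h\<in>insert a F. inj_on (\<lambda>i. c (h,i)) {..<k h}"
    have cF: "card (insert a F) = Suc (card F)" using insert by simp
    have A': "\<forall>h\<in>F. card F \<le> k h" using A cF by auto
    have B': "\<forall>h\<in>F. inj_on (\<lambda>i. c (h,i)) {..<k h}" using B by auto
    obtain s where s1: "\<forall>h\<in>F. s h < k h" and s2: "inj_on (\<lambda>h. c (h, s h)) F"
      using insert.IH A' B' by blast
    let ?U = "(\<lambda>h. c (h, s h)) ` F"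
    have c1: "card ?U \<le> card F" by (rule card_image_le[OF insert.hyps(1)])
    have c2: "card ((\<lambda>i. c (a,i)) ` {..<k a}) = k a" using B by (simp add: card_image)
    have c3: "k a \<ge> Suc (card F)" using A cF by auto
    have "\<not> ((\<lambda>i. c (a,i)) ` {..<k a} \<subseteq> ?U)"
    proof
      assume "(\<lambda>i. c (a,i)) ` {..<k a} \<subseteq> ?U"
      hence "card ((\<lambda>i. c (a,i)) ` {..<k a}) \<le> card ?U"
        by (intro card_mono) (simp_all add: insert.hyps(1))
      with c1 c2 c3 show False by linarith
    qed
    then obtain i where i: "i < k a" "c (a,i) \<notin> ?U" by auto
    define s' where "s' = s(a := i)"
    have e: "\<And>h. h \<in> F \<Longrightarrow> s' h = s h" using insert.hyps(2) unfolding s'_def by auto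
    have sa: "s' a = i" unfolding s'_def by simp
    have img: "(\<lambda>h. c (h, s' h)) ` F = ?U" by (rule image_cong) (simp_all add: e)
    have "\<forall>h\<in>insert a F. s' h < k h" using s1 i(1) e sa by auto
    moreover have "inj_on (\<lambda>h. c (h, s' h)) (insert a F)"
    proof -
      have "inj_on (\<lambda>h. c (h, s' h)) F" using s2 e by (simp add: inj_on_def)
      moreover have "c (a, s' a) \<notin> (\<lambda>h. c (h, s' h)) ` F" using i(2) sa img by simp
      ultimately show ?thesis using insert.hyps(2) by simp
    qed
    ultimately show "\<exists>s. (\<forall>h\<in>insert a F. s h < k h) \<and> inj_on (\<lambda>h. c (h, s h)) (insert a F)" by blast
  qed
qed

lemma proper_clique_inj:
  assumes "proper_coloring (rep_V V k) (rep_E E) c" "h \<in> V"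
  shows "inj_on (\<lambda>i. c (h,i)) {..<k h}"
  using assms unfolding proper_coloring_def inj_on_def rep_V_def rep_E_def by fastforce

lemma good_exists:
  assumes f: "finite V" shows "good V E (\<lambda>h. card V)"
proof -
  have "\<forall>h\<in>V. 1 \<le> card V" using f by (auto simp: Suc_le_eq card_gt_0_iff)
  moreover have "\<forall>c. proper_coloring (rep_V V (\<lambda>h. card V)) (rep_E E) c \<longrightarrow>
          (\<exists>s. (\<forall>h\<in>V. s h < card V) \<and> inj_on (\<lambda>h. c (h, s h)) V)"
  proof (intro allI impI)
    fix c assume P: "proper_coloring (rep_V V (\<lambda>h. card V)) (rep_E E) c"
    have "\<forall>h\<in>V. inj_on (\<lambda>i. c (h,i)) {..<card V}" using proper_clique_inj[OF P] by blast
    moreover have "\<forall>h\<in>V. card V \<le> card V" by blast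
    ultimately show "\<exists>s. (\<forall>h\<in>V. s h < card V) \<and> inj_on (\<lambda>h. c (h, s h)) V"
      using greedy[OF f, of "\<lambda>h. card V" c] by blast
  qed
  ultimately show ?thesis unfolding good_def by blast
qed

lemma rho_R_ex:
  assumes f: "finite V" shows "\<exists>k. good V E k \<and> sum k V = rho_R V E"
proof -
  have "\<exists>m k. good V E k \<and> sum k V = m" using good_exists[OF f] by blast
  then show ?thesis unfolding rho_R_alt by (rule LeastI_ex)
qed


lemma rep_E_sym: "simple_graph V E \<Longrightarrow> rep_E E x y \<Longrightarrow> rep_E E y x"
  unfolding simple_graph_def rep_E_def by auto

lemma rep_E_irrefl: "\<not> rep_E E x x"
  unfolding rep_E_def by auto

lemma part1:
  assumes sg: "simple_graph V E"
  shows "rho V E \<le> rho_R V E"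
proof -
  have fV: "finite V" using sg simple_graph_def by auto
  obtain k where gk: "good V E k" and sk: "sum k V = rho_R V E" using rho_R_ex[OF fV] by blast
  define m where "m = rho_R V E"
  define R where "R = rep_V V k"
  have fR: "finite R" using fV finite_rep_V R_def by simp
  have cR: "card R = m" using card_rep_V[OF fV] sk R_def m_def by simp
  have "\<exists>g. bij_betw g {0..<card R} R" by (rule ex_bij_betw_nat_finite[OF fR])
  then obtain g where bij0: "bij_betw g {0..<card R} R" by blast
  have bij: "bij_betw g {..<m} R" using bij0 unfolding cR atLeast0LessThan .
  define gi where "gi = inv_into {..<m} g"
  have gR: "g ` {..<m} = R" using bij by (simp add: bij_betw_def)
  have gi_in: "\<And>x. x\<in>R \<Longrightarrow> gi x < m"
  proof -
    fix x assume "x \<in> R" hence "x \<in> g ` {..<m}" using gR by simp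
    hence "gi x \<in> {..<m}" unfolding gi_def by (rule inv_into_into)
    thus "gi x < m" by simp
  qed
  have g_gi: "\<And>x. x\<in>R \<Longrightarrow> g (gi x) = x"
  proof -
    fix x assume "x \<in> R" hence "x \<in> g ` {..<m}" using gR by simp
    thus "g (gi x) = x" unfolding gi_def by (rule f_inv_into_f)
  qed
  have gi_inj: "inj_on gi R" unfolding gi_def by (rule inj_on_inv_into) (simp add: gR)
  define EG where "EG a b \<longleftrightarrow> a < m \<and> b < m \<and> rep_E E (g a) (g b)" for a b
  have sgG: "simple_graph {..<m} EG"
    unfolding simple_graph_def
  proof (intro conjI allI impI)
    show "finite {..<m}" by simp
    fix u v assume uv: "EG u v"
    show "u \<in> {..<m}" "v \<in> {..<m}" using uv unfolding EG_def by simp_all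
    show "u \<noteq> v" using uv rep_E_irrefl unfolding EG_def by metis
    show "EG v u" using uv rep_E_sym[OF sg] unfolding EG_def by blast
  qed
  have "\<forall>c. proper_coloring {..<m} EG c \<longrightarrow> has_rainbow_induced_copy V E {..<m} EG c"
  proof (intro allI impI)
    fix c assume pc: "proper_coloring {..<m} EG c"
    have "proper_coloring R (rep_E E) (c \<circ> gi)"
      unfolding proper_coloring_def
    proof (intro ballI impI)
      fix x y assume x: "x \<in> R" and y: "y \<in> R" and xy: "rep_E E x y"
      have "EG (gi x) (gi y)" unfolding EG_def using gi_in g_gi x y xy by simp
      then show "(c \<circ> gi) x \<noteq> (c \<circ> gi) y" using pc gi_in x y unfolding proper_coloring_def by simp
    qed
    then obtain s where s1: "\<forall>h\<in>V. s h < k h" and s2: "inj_on (\<lambda>h. (c \<circ> gi) (h, s h)) V"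
      using gk unfolding R_def good_def by blast
    define f where "f h = gi (h, s h)" for h
    have mem: "\<And>h. h\<in>V \<Longrightarrow> (h, s h) \<in> R" using s1 unfolding R_def rep_V_def by auto
    have "f ` V \<subseteq> {..<m}" using mem gi_in unfolding f_def by auto
    moreover have "inj_on f V"
    proof (rule inj_onI)
      fix u v assume u: "u \<in> V" and v: "v \<in> V" and e: "f u = f v"
      have "(u, s u) = (v, s v)" using inj_onD[OF gi_inj] e mem u v unfolding f_def by blast
      then show "u = v" by simp
    qed
    moreover have "\<forall>u\<in>V. \<forall>v\<in>V. EG (f u) (f v) \<longleftrightarrow> E u v"
    proof (intro ballI)
      fix u v assume u: "u \<in> V" and v: "v \<in> V"
      have "EG (f u) (f v) \<longleftrightarrow> rep_E E (u, s u) (v, s v)"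
        unfolding EG_def f_def using gi_in g_gi mem u v by simp
      also have "\<dots> \<longleftrightarrow> E u v"
        using sg unfolding rep_E_def simple_graph_def by auto
      finally show "EG (f u) (f v) \<longleftrightarrow> E u v" .
    qed
    moreover have "inj_on (c \<circ> f) V" using s2 unfolding f_def by (simp add: comp_def)
    ultimately show "has_rainbow_induced_copy V E {..<m} EG c"
      unfolding has_rainbow_induced_copy_def by blast
  qed
  then have "\<exists>EG :: nat \<Rightarrow> nat \<Rightarrow> bool. simple_graph {..<m} EG \<and>
       (\<forall>c. proper_coloring {..<m} EG c \<longrightarrow> has_rainbow_induced_copy V E {..<m} EG c)"
    using sgG by blast
  then show ?thesis unfolding rho_def m_def by (rule Least_le)
qed


lemma mem_rep_V: "x \<in> rep_V V k \<longleftrightarrow> fst x \<in> V \<and> snd x < k (fst x)"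
  unfolding rep_V_def by (cases x) simp

lemma proper_mono:
  assumes "proper_coloring A R c" "B \<subseteq> A" "\<And>x y. x\<in>B \<Longrightarrow> y\<in>B \<Longrightarrow> R' x y \<Longrightarrow> R x y"
  shows "proper_coloring B R' c"
  using assms unfolding proper_coloring_def by blast

lemma rep_E_mono: "(\<And>u v. E' u v \<Longrightarrow> E u v) \<Longrightarrow> rep_E E' x y \<Longrightarrow> rep_E E x y"
  unfolding rep_E_def by blast

lemma part2:
  assumes fV: "finite V" and sub: "\<forall>u v. E' u v \<longrightarrow> E u v"
  shows "rho_R V E \<le> rho_R V E'"
proof -
  obtain k where gk: "good V E' k" and sk: "sum k V = rho_R V E'" using rho_R_ex[OF fV] by blast
  have "good V E k"
    unfolding good_def
  proof (intro conjI allI impI)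
    show "\<forall>h\<in>V. 1 \<le> k h" using gk unfolding good_def by blast
    fix c assume pc: "proper_coloring (rep_V V k) (rep_E E) c"
    have "proper_coloring (rep_V V k) (rep_E E') c"
      by (rule proper_mono[OF pc order_refl]) (rule rep_E_mono[of E' E], use sub in blast)
    then show "\<exists>s. (\<forall>h\<in>V. s h < k h) \<and> inj_on (\<lambda>h. c (h, s h)) V"
      using gk unfolding good_def by blast
  qed
  from rho_R_le[OF this] sk show ?thesis by simp
qed

lemma good_restr:
  assumes fV: "finite V" and sub: "V1 \<subseteq> V" and gk: "good V E k"
  shows "good V1 (restr E V1) k"
  unfolding good_def
proof (intro conjI allI impI)
  show "\<forall>h\<in>V1. 1 \<le> k h" using gk sub unfolding good_def by blast
  fix c1 assume pc1: "proper_coloring (rep_V V1 k) (rep_E (restr E V1)) c1"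
  have "\<exists>f n. f ` rep_V V k = {i::nat. i < n} \<and> inj_on f (rep_V V k)"
    by (rule finite_imp_inj_to_nat_seg[OF finite_rep_V[OF fV]])
  then obtain f n where "f ` rep_V V k = {i::nat. i < n}" and finj: "inj_on f (rep_V V k)"
    by (elim exE conjE)
  define c where "c x = (if fst x \<in> V1 then 2 * c1 x else 2 * f x + 1)" for x
  have "proper_coloring (rep_V V k) (rep_E E) c"
    unfolding proper_coloring_def
  proof (intro ballI impI)
    fix x y assume x: "x \<in> rep_V V k" and y: "y \<in> rep_V V k" and xy: "rep_E E x y"
    show "c x \<noteq> c y"
    proof (cases "fst x \<in> V1")
      case True note tx = True
      show ?thesis
      proof (cases "fst y \<in> V1")
        case True
        have "rep_E (restr E V1) x y" using xy tx True unfolding rep_E_def restr_def by blast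
        moreover have "x \<in> rep_V V1 k" "y \<in> rep_V V1 k" using x y tx True by (simp_all add: mem_rep_V)
        ultimately have "c1 x \<noteq> c1 y" using pc1 unfolding proper_coloring_def by blast
        then show ?thesis using tx True unfolding c_def by simp
      next
        case False
        have "c x = 2 * c1 x" "c y = 2 * f y + 1" using tx False unfolding c_def by simp_all
        then show ?thesis by presburger
      qed
    next
      case False note fx = False
      show ?thesis
      proof (cases "fst y \<in> V1")
        case True
        have "c x = 2 * f x + 1" "c y = 2 * c1 y" using fx True unfolding c_def by simp_all
        then show ?thesis by presburger
      next
        case False
        have "x \<noteq> y"
        proof
          assume "x = y" with xy rep_E_irrefl show False by blast
        qed
        then have "f x \<noteq> f y" using finj x y unfolding inj_on_def by blast
        then show ?thesis using fx False unfolding c_def by simp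
      qed
    qed
  qed
  then obtain s where s1: "\<forall>h\<in>V. s h < k h" and s2: "inj_on (\<lambda>h. c (h, s h)) V"
    using gk unfolding good_def by blast
  have "inj_on (\<lambda>h. c1 (h, s h)) V1"
  proof (rule inj_onI)
    fix u v assume u: "u \<in> V1" and v: "v \<in> V1" and e: "c1 (u, s u) = c1 (v, s v)"
    have "c (u, s u) = c (v, s v)" using u v e unfolding c_def by simp
    then show "u = v" using s2 u v sub unfolding inj_on_def by blast
  qed
  then show "\<exists>s. (\<forall>h\<in>V1. s h < k h) \<and> inj_on (\<lambda>h. c1 (h, s h)) V1"
    using s1 sub by blast
qed

lemma lower:
  assumes fV: "finite V" and disj: "V1 \<inter> V2 = {}" and un: "V1 \<union> V2 = V"
  shows "rho_R V1 (restr E V1) + rho_R V2 (restr E V2) \<le> rho_R V E"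
proof -
  obtain k where gk: "good V E k" and sk: "sum k V = rho_R V E" using rho_R_ex[OF fV] by blast
  have f1: "finite V1" "finite V2" using fV un by (auto intro: finite_subset)
  have "rho_R V1 (restr E V1) \<le> sum k V1" using good_restr[OF fV _ gk, of V1] un rho_R_le by blast
  moreover have "rho_R V2 (restr E V2) \<le> sum k V2" using good_restr[OF fV _ gk, of V2] un rho_R_le by blast
  moreover have "sum k V = sum k V1 + sum k V2" using sum.union_disjoint[OF f1 disj] un by simp
  ultimately show ?thesis using sk by linarith
qed


lemma good_pos: "good V E k \<Longrightarrow> h \<in> V \<Longrightarrow> 1 \<le> k h"
  unfolding good_def by blast

lemma good_sel: "good V E k \<Longrightarrow> proper_coloring (rep_V V k) (rep_E E) c \<Longrightarrow>
    \<exists>s. (\<forall>h\<in>V. s h < k h) \<and> inj_on (\<lambda>h. c (h, s h)) V"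
  unfolding good_def by blast

lemma card_le1:
  assumes pc: "proper_coloring (rep_V V k) (rep_E E) c" and u: "u \<in> V"
  shows "card {i. i < k u \<and> c (u, i) = t} \<le> 1"
proof -
  have "finite {i. i < k u \<and> c (u, i) = t}" by simp
  moreover have "\<forall>a1\<in>{i. i < k u \<and> c (u, i) = t}. \<forall>a2\<in>{i. i < k u \<and> c (u, i) = t}. a1 = a2"
    using proper_clique_inj[OF pc u] unfolding inj_on_def by auto
  ultimately have "card {i. i < k u \<and> c (u, i) = t} \<le> Suc 0" using card_le_Suc0_iff_eq by blast
  then show ?thesis by simp
qed

lemma upper:
  assumes sg: "simple_graph V E" and disj: "V1 \<inter> V2 = {}" and un: "V1 \<union> V2 = V"
  shows "rho_R V E \<le> rho_R V1 (restr E V1) + rho_R V2 (restr E V2)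
                        + card {(u, v). u \<in> V1 \<and> v \<in> V2 \<and> \<not> E u v}"
proof -
  have fV: "finite V" using sg simple_graph_def by auto
  have "finite (V1 \<union> V2)" using fV un by simp
  then have f1: "finite V1" and f2: "finite V2" by simp_all
  obtain k1 where g1: "good V1 (restr E V1) k1" and s1: "sum k1 V1 = rho_R V1 (restr E V1)"
    using rho_R_ex[OF f1] by blast
  obtain k2 where g2: "good V2 (restr E V2) k2" and s2: "sum k2 V2 = rho_R V2 (restr E V2)"
    using rho_R_ex[OF f2] by blast
  define N where "N u = {v\<in>V2. \<not> E u v}" for u
  define d where "d u = card (N u)" for u
  define k where "k h = (if h \<in> V1 then k1 h + d h else k2 h)" for h
  have "sum k V = sum k V1 + sum k V2" using sum.union_disjoint[OF f1 f2 disj] un by simp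
  moreover have "sum k V1 = sum k1 V1 + sum d V1"
    unfolding sum.distrib[symmetric] by (rule sum.cong) (simp_all add: k_def)
  moreover have "sum k V2 = sum k2 V2"
    by (rule sum.cong) (use disj in \<open>auto simp: k_def\<close>)
  moreover have "sum d V1 = card {(u, v). u \<in> V1 \<and> v \<in> V2 \<and> \<not> E u v}"
  proof -
    have "{(u, v). u \<in> V1 \<and> v \<in> V2 \<and> \<not> E u v} = Sigma V1 N" unfolding N_def by auto
    moreover have "card (Sigma V1 N) = sum d V1" unfolding d_def
      by (rule card_SigmaI[OF f1]) (simp add: N_def f2)
    ultimately show ?thesis by simp
  qed
  ultimately have sk: "sum k V = rho_R V1 (restr E V1) + rho_R V2 (restr E V2)
                        + card {(u, v). u \<in> V1 \<and> v \<in> V2 \<and> \<not> E u v}"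
    using s1 s2 by simp
  have "good V E k"
    unfolding good_def
  proof (intro conjI allI impI)
    show "\<forall>h\<in>V. 1 \<le> k h"
    proof
      fix h assume h: "h \<in> V"
      show "1 \<le> k h"
      proof (cases "h \<in> V1")
        case True then show ?thesis using good_pos[OF g1 True] unfolding k_def by simp
      next
        case False then have "h \<in> V2" using h un by blast
        then show ?thesis using good_pos[OF g2] False unfolding k_def by simp
      qed
    qed
    fix c assume pc: "proper_coloring (rep_V V k) (rep_E E) c"
    have pc2: "proper_coloring (rep_V V2 k2) (rep_E (restr E V2)) c"
    proof (rule proper_mono[OF pc])
      show "rep_V V2 k2 \<subseteq> rep_V V k"
      proof
        fix x assume x: "x \<in> rep_V V2 k2"
        then have "fst x \<in> V2" "snd x < k2 (fst x)" by (simp_all add: mem_rep_V)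
        moreover have "fst x \<notin> V1" using disj \<open>fst x \<in> V2\<close> by blast
        moreover have "fst x \<in> V" using un \<open>fst x \<in> V2\<close> by blast
        ultimately show "x \<in> rep_V V k" by (simp add: mem_rep_V k_def)
      qed
      fix x y assume "rep_E (restr E V2) x y"
      then show "rep_E E x y" by (rule rep_E_mono[rotated]) (simp add: restr_def)
    qed
    obtain t where t1: "\<forall>h\<in>V2. t h < k2 h" and t2: "inj_on (\<lambda>h. c (h, t h)) V2"
      using good_sel[OF g2 pc2] by blast
    define Rs where "Rs u = {i. i < k u \<and> (\<forall>v\<in>N u. c (u, i) \<noteq> c (v, t v))}" for u
    have cardR: "k1 u \<le> card (Rs u)" if u: "u \<in> V1" for u
    proof -
      define Bad where "Bad = (\<Union>v\<in>N u. {i. i < k u \<and> c (u, i) = c (v, t v)})"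
      have uV: "u \<in> V" using u un by blast
      have fN: "finite (N u)" unfolding N_def using f2 by simp
      have "card Bad \<le> (\<Sum>v\<in>N u. card {i. i < k u \<and> c (u, i) = c (v, t v)})"
        unfolding Bad_def by (rule card_UN_le[OF fN])
      also have "\<dots> \<le> (\<Sum>v\<in>N u. 1)"
        by (rule sum_mono) (rule card_le1[OF pc uV])
      also have "\<dots> = d u" unfolding d_def by simp
      finally have cB: "card Bad \<le> d u" .
      have sub: "{..<k u} \<subseteq> Rs u \<union> Bad" unfolding Rs_def Bad_def by auto
      have fRB: "finite (Rs u \<union> Bad)"
        by (rule finite_subset[of _ "{..<k u}"]) (auto simp: Rs_def Bad_def)
      have "k u \<le> card (Rs u \<union> Bad)" using card_mono[OF fRB sub] by simp
      also have "\<dots> \<le> card (Rs u) + card Bad" by (rule card_Un_le)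
      finally have "k u \<le> card (Rs u) + card Bad" .
      moreover have "k u = k1 u + d u" using u unfolding k_def by simp
      ultimately show ?thesis using cB by linarith
    qed
    have "\<forall>u\<in>V1. \<exists>f. f ` {..<k1 u} \<subseteq> Rs u \<and> inj_on f {..<k1 u}"
    proof
      fix u assume u: "u \<in> V1"
      show "\<exists>f. f ` {..<k1 u} \<subseteq> Rs u \<and> inj_on f {..<k1 u}"
      proof (rule card_le_inj)
        show "finite (Rs u)" unfolding Rs_def by simp
        show "card {..<k1 u} \<le> card (Rs u)" using cardR[OF u] by simp
      qed simp
    qed
    then obtain \<sigma> where sig: "\<forall>u\<in>V1. \<sigma> u ` {..<k1 u} \<subseteq> Rs u \<and> inj_on (\<sigma> u) {..<k1 u}"
      by (rule bchoice[THEN exE])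
    have sigR: "\<sigma> u i \<in> Rs u" if "u \<in> V1" "i < k1 u" for u i using sig that by blast
    have sigk: "\<sigma> u i < k u" if "u \<in> V1" "i < k1 u" for u i using sigR[OF that] unfolding Rs_def by simp
    define c' where "c' x = c (fst x, \<sigma> (fst x) (snd x))" for x
    have pc1: "proper_coloring (rep_V V1 k1) (rep_E (restr E V1)) c'"
      unfolding proper_coloring_def
    proof (intro ballI impI)
      fix x y assume x: "x \<in> rep_V V1 k1" and y: "y \<in> rep_V V1 k1" and xy: "rep_E (restr E V1) x y"
      obtain u i where xe: "x = (u, i)" by (cases x)
      obtain w j where ye: "y = (w, j)" by (cases y)
      have u: "u \<in> V1" "i < k1 u" using x xe by (simp_all add: mem_rep_V)
      have w: "w \<in> V1" "j < k1 w" using y ye by (simp_all add: mem_rep_V)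
      have m1: "(u, \<sigma> u i) \<in> rep_V V k" using u sigk un by (auto simp: mem_rep_V)
      have m2: "(w, \<sigma> w j) \<in> rep_V V k" using w sigk un by (auto simp: mem_rep_V)
      have "rep_E E (u, \<sigma> u i) (w, \<sigma> w j)"
      proof (cases "u = w")
        case True
        then have "i \<noteq> j" using xy xe ye unfolding rep_E_def by simp
        have inj: "inj_on (\<sigma> u) {..<k1 u}" using sig u(1) by blast
        have "\<sigma> u i \<noteq> \<sigma> u j"
        proof
          assume "\<sigma> u i = \<sigma> u j"
          hence "i = j" using inj_onD[OF inj] u(2) w(2) True by simp
          with \<open>i \<noteq> j\<close> show False by simp
        qed
        then show ?thesis using True unfolding rep_E_def by simp
      next
        case False
        then have "E u w" using xy xe ye unfolding rep_E_def restr_def by simp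
        then show ?thesis using False unfolding rep_E_def by simp
      qed
      then have "c (u, \<sigma> u i) \<noteq> c (w, \<sigma> w j)" using pc m1 m2 unfolding proper_coloring_def by blast
      then show "c' x \<noteq> c' y" unfolding c'_def xe ye by simp
    qed
    obtain r where r1: "\<forall>h\<in>V1. r h < k1 h" and r2: "inj_on (\<lambda>h. c' (h, r h)) V1"
      using good_sel[OF g1 pc1] by blast
    define s where "s h = (if h \<in> V1 then \<sigma> h (r h) else t h)" for h
    have sb: "\<forall>h\<in>V. s h < k h"
    proof
      fix h assume h: "h \<in> V"
      show "s h < k h"
      proof (cases "h \<in> V1")
        case True then show ?thesis using sigk r1 unfolding s_def by simp
      next
        case False then have "h \<in> V2" using h un by blast
        then show ?thesis using t1 False unfolding s_def k_def by simp
      qed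
    qed
    have cross: "c (u, s u) \<noteq> c (v, s v)" if u: "u \<in> V1" and v: "v \<in> V2" for u v
    proof (cases "E u v")
      case True
      have uv: "u \<noteq> v" using u v disj by blast
      have "rep_E E (u, s u) (v, s v)" using True uv unfolding rep_E_def by simp
      moreover have "(u, s u) \<in> rep_V V k" "(v, s v) \<in> rep_V V k"
        using sb u v un by (auto simp: mem_rep_V)
      ultimately show ?thesis using pc unfolding proper_coloring_def by blast
    next
      case False
      then have vN: "v \<in> N u" using v unfolding N_def by simp
      have "s u \<in> Rs u" using sigR[OF u] r1 u unfolding s_def by simp
      then have "c (u, s u) \<noteq> c (v, t v)" using vN unfolding Rs_def by blast
      moreover have "s v = t v" using v disj unfolding s_def by auto
      ultimately show ?thesis by simp
    qed
    have "inj_on (\<lambda>h. c (h, s h)) V"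
    proof (rule inj_onI)
      fix u v assume u: "u \<in> V" and v: "v \<in> V" and e: "c (u, s u) = c (v, s v)"
      show "u = v"
      proof (cases "u \<in> V1")
        case uT: True
        show ?thesis
        proof (cases "v \<in> V1")
          case True
          have "c' (u, r u) = c' (v, r v)" using e uT True unfolding c'_def s_def by simp
          then show ?thesis using r2 uT True unfolding inj_on_def by blast
        next
          case False
          then have "v \<in> V2" using v un by blast
          then show ?thesis using cross[OF uT] e by blast
        qed
      next
        case uF: False
        then have u2: "u \<in> V2" using u un by blast
        show ?thesis
        proof (cases "v \<in> V1")
          case True
          then show ?thesis using cross[OF True u2] e by simp
        next
          case False
          then have v2: "v \<in> V2" using v un by blast
          have "c (u, t u) = c (v, t v)" using e uF False unfolding s_def by simp
          then show ?thesis using t2 u2 v2 unfolding inj_on_def by blast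
        qed
      qed
    qed
    then show "\<exists>s. (\<forall>h\<in>V. s h < k h) \<and> inj_on (\<lambda>h. c (h, s h)) V" using sb by blast
  qed
  from rho_R_le[OF this] sk show ?thesis by simp
qed


theorem theorem4p1:
  fixes V :: "'a set" and E :: "'a \<Rightarrow> 'a \<Rightarrow> bool"
  assumes "simple_graph V E"
  shows "rho V E \<le> rho_R V E
    \<and> (\<forall>E'. simple_graph V E' \<longrightarrow> (\<forall>u v. E' u v \<longrightarrow> E u v) \<longrightarrow> rho_R V E \<le> rho_R V E')
    \<and> (\<forall>V1 V2. V1 \<inter> V2 = {} \<longrightarrow> V1 \<union> V2 = V \<longrightarrow>
           rho_R V1 (restr E V1) + rho_R V2 (restr E V2) \<le> rho_R V E \<and>
           rho_R V E \<le> rho_R V1 (restr E V1) + rho_R V2 (restr E V2)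
                        + card {(u, v). u \<in> V1 \<and> v \<in> V2 \<and> \<not> E u v})"
proof -
  have fV: "finite V" using assms simple_graph_def by auto
  show ?thesis
  proof (intro conjI allI impI)
    show "rho V E \<le> rho_R V E" by (rule part1[OF assms])
    fix E' assume "\<forall>u v. E' u v \<longrightarrow> E u v"
    then show "rho_R V E \<le> rho_R V E'" by (rule part2[OF fV])
  next
    fix V1 V2 assume d: "V1 \<inter> V2 = {}" and u: "V1 \<union> V2 = V"
    show "rho_R V1 (restr E V1) + rho_R V2 (restr E V2) \<le> rho_R V E" by (rule lower[OF fV d u])
    show "rho_R V E \<le> rho_R V1 (restr E V1) + rho_R V2 (restr E V2)
                        + card {(u, v). u \<in> V1 \<and> v \<in> V2 \<and> \<not> E u v}"
      by (rule upper[OF assms d u])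
  qed
qed

end
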